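(* Let $p>1$, $\kappa\in\mathbb{R}$, $h>0$ and $\sigma<1$. Suppose $\eta:\mathbb{R}\to\mathbb{C}$ is a nontrivial finite energy solution (i.e. $\eta\in L^\infty(\mathbb{R})\cap\dot H^1(\mathbb{R})$) of $$(\kappa+ih\sigma)\eta-ih\Lambda_z\eta-\eta_{zz}-\delta|\eta|^{p-1}\eta=0,\qquad \Lambda_z=\tfrac12+z\partial_z.$$ Then $\sigma>0$ and $$0=(1-\sigma)\int_{-\infty}^{+\infty}|\eta_z|^2\,dz-\Big(\frac12-\sigma\Big)|\eta(0)|^{p+1}.$$ Consequently, if $\sigma=\sigma_c:=\frac12-\frac1{p-1}$, then $E(\eta)=0$, where $E(\eta)=\frac12\int_{-\infty}^{+\infty}|\eta_z|^2\,dz-\frac1{p+1}|\eta(0)|^{p+1}$.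
   Context: $\delta$ is the Dirac delta at the origin. The equation means: $(\kappa+ih\sigma)\eta-ih(\frac12\eta+z\eta_z)-\eta_{zz}=0$ for $z\neq0$, $\eta$ is continuous at $z=0$ (i.e. $\eta(0-)=\eta(0+)=:\eta(0)$), and $\eta_z(0+)-\eta_z(0-)=-|\eta(0)|^{p-1}\eta(0)$, where $f(0\pm)$ denote one-sided limits. *)

theory Defs
  imports "HOL-Analysis.Analysis"
begin

definition energy :: "real \<Rightarrow> (real \<Rightarrow> complex) \<Rightarrow> (real \<Rightarrow> complex) \<Rightarrow> real" where
  "energy p eta eta' = (1/2) * integral UNIV (\<lambda>z. (cmod (eta' z))^2)
      - (1 / (p + 1)) * cmod (eta 0) powr (p + 1)"

text \<open>Finite energy solution of
  (kappa + i h sigma) eta - i h (eta/2 + z eta_z) - eta_zz - delta |eta|^(p-1) eta = 0,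
  in the sense: the ODE holds classically for z \<noteq> 0, eta is continuous at 0,
  and eta_z(0+) - eta_z(0-) = -|eta(0)|^(p-1) eta(0); finite energy means eta bounded
  and eta_z square integrable.\<close>
definition finite_energy_solution ::
  "real \<Rightarrow> real \<Rightarrow> real \<Rightarrow> real \<Rightarrow> (real \<Rightarrow> complex) \<Rightarrow> (real \<Rightarrow> complex) \<Rightarrow> (real \<Rightarrow> complex) \<Rightarrow> bool" where
  "finite_energy_solution p \<kappa> h \<sigma> eta eta' eta'' \<longleftrightarrow>
     (\<forall>z. z \<noteq> 0 \<longrightarrow>
        (eta has_vector_derivative eta' z) (at z) \<and>
        (eta' has_vector_derivative eta'' z) (at z) \<and>
        (complex_of_real \<kappa> + \<i> * complex_of_real (h * \<sigma>)) * eta z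
          - \<i> * complex_of_real h * (eta z / 2 + complex_of_real z * eta' z)
          - eta'' z = 0) \<and>
     isCont eta 0 \<and>
     (\<exists>a b. (eta' \<longlongrightarrow> a) (at_right 0) \<and> (eta' \<longlongrightarrow> b) (at_left 0) \<and>
            a - b = - (complex_of_real (cmod (eta 0) powr (p - 1)) * eta 0)) \<and>
     (\<exists>M. \<forall>z. cmod (eta z) \<le> M) \<and>
     (\<lambda>z. (cmod (eta' z))^2) integrable_on UNIV"

end

theory Submission
  imports Defs
begin


lemma ftc_lim:
  fixes f f' :: "real \<Rightarrow> real"
  assumes ab: "a < b" and der: "\<And>x. a < x \<Longrightarrow> x < b \<Longrightarrow> (f has_real_derivative f' x) (at x)"
    and la: "(f \<longlongrightarrow> La) (at_right a)" and lb: "(f \<longlongrightarrow> Lb) (at_left b)"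
  shows "(f' has_integral (Lb - La)) {a..b}"
proof -
  define g where "g x = (if x \<le> a then La else if x \<ge> b then Lb else f x)" for x
  have eq: "g x = f x" if "a<x" "x<b" for x using that by (simp add: g_def)
  have derg: "(g has_real_derivative f' x) (at x)" if "a<x" "x<b" for x
    by (rule has_field_derivative_transform_within_open[OF der[OF that], of "{a<..<b}"]) (use that eq in auto)
  have ra: "(g \<longlongrightarrow> La) (at_right a)"
  proof (rule Lim_transform_eventually[OF la])
    show "\<forall>\<^sub>F x in at_right a. f x = g x"
      using eventually_at_right_real[OF ab] by eventually_elim (use eq in auto)
  qed
  have lb': "(g \<longlongrightarrow> Lb) (at_left b)"
  proof (rule Lim_transform_eventually[OF lb])
    show "\<forall>\<^sub>F x in at_left b. f x = g x"
      using eventually_at_left_real[OF ab] by eventually_elim (use eq in auto)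
  qed
  have cont: "continuous_on {a..b} g"
    unfolding continuous_on_eq_continuous_within
  proof
    fix x assume x: "x \<in> {a..b}"
    consider "x = a" | "x = b" | "a < x" "x < b" using x by fastforce
    then show "continuous (at x within {a..b}) g"
    proof cases
      case 1
      then show ?thesis using ra ab by (simp add: continuous_within at_within_Icc_at_right g_def)
    next
      case 2
      then show ?thesis using lb' ab by (simp add: continuous_within at_within_Icc_at_left g_def)
    next
      case 3
      then show ?thesis
        using DERIV_isCont[OF derg[OF 3]] continuous_at_imp_continuous_within by blast
    qed
  qed
  have "(f' has_integral (g b - g a)) {a..b}"
    by (rule fundamental_theorem_of_calculus_interior[OF less_imp_le[OF ab] cont])
       (use derg in \<open>auto simp: has_real_derivative_iff_has_vector_derivative\<close>)
  then show ?thesis using ab by (simp add: g_def)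
qed

lemma int_sym_tendsto:
  fixes q :: "real \<Rightarrow> real"
  assumes "(q has_integral A) UNIV"
  shows "((\<lambda>R. integral {-R..R} q) \<longlongrightarrow> A) at_top"
proof (rule tendstoI)
  fix e :: real assume e: "e > 0"
  from assms[unfolded has_integral_alt'] e obtain B where B: "B > 0"
    "\<And>a b. ball 0 B \<subseteq> cbox a b \<Longrightarrow> norm (integral (cbox a b) (\<lambda>x. if x \<in> UNIV then q x else 0) - A) < e"
    by blast
  show "\<forall>\<^sub>F R in at_top. dist (integral {-R..R} q) A < e"
    unfolding eventually_at_top_linorder
  proof (intro exI allI impI)
    fix R assume "R \<ge> B"
    then have "ball 0 B \<subseteq> cbox (-R) R" by (auto simp: dist_real_def)
    from B(2)[OF this] show "dist (integral {-R..R} q) A < e"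
      by (simp add: dist_real_def)
  qed
qed

lemma good_radii:
  fixes q :: "real \<Rightarrow> real"
  assumes int: "q integrable_on UNIV" and nn: "\<And>x. q x \<ge> 0" and d: "\<delta> > 0"
  shows "\<exists>R\<ge>T. R > 0 \<and> R * (q R + q (-R)) < \<delta>"
proof (rule ccontr)
  assume neg: "\<not> (\<exists>R\<ge>T. R > 0 \<and> R * (q R + q (-R)) < \<delta>)"
  define T1 where "T1 = max T 1"
  have T1: "T1 \<ge> 1" "T1 \<ge> T" by (auto simp: T1_def)
  have low: "\<delta> / t \<le> q t + q (-t)" if "t \<ge> T1" for t
  proof -
    have "t > 0" "t \<ge> T" using that T1 by auto
    with neg have "t * (q t + q (-t)) \<ge> \<delta>" by force
    then show ?thesis using \<open>t > 0\<close> by (simp add: divide_le_eq mult.commute)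
  qed
  define Q where "Q = integral UNIV q"
  define X where "X = T1 * exp (2 * Q / \<delta> + 1)"
  have Q0: "Q \<ge> 0" unfolding Q_def using nn by (simp add: integral_nonneg int)
  have "exp (2 * Q / \<delta> + 1) \<ge> 1" using Q0 d by simp
  then have X: "X \<ge> T1" unfolding X_def using T1 by (simp add: mult_le_cancel_left1 )
  have lnX: "ln X = ln T1 + 2 * Q / \<delta> + 1" unfolding X_def using T1 by (simp add: ln_mult)
  have i1: "((\<lambda>t. \<delta> / t) has_integral (\<delta> * ln X - \<delta> * ln T1)) {T1..X}"
  proof (rule fundamental_theorem_of_calculus[OF X])
    fix t assume "t \<in> {T1..X}"
    then have "t > 0" using T1 by auto
    then show "((\<lambda>t. \<delta> * ln t) has_vector_derivative \<delta> / t) (at t within {T1..X})"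
      by (auto intro!: derivative_eq_intros simp: has_real_derivative_iff_has_vector_derivative[symmetric])
  qed
  have iq1: "q integrable_on {T1..X}" by (rule integrable_on_subinterval[OF int]) auto
  have iq2: "q integrable_on {-X..-T1}" by (rule integrable_on_subinterval[OF int]) auto
  have iq2': "(\<lambda>t. q (-t)) integrable_on {T1..X}"
    using iq2 Henstock_Kurzweil_Integration.integrable_reflect_real[of q "-T1" "-X"] by simp
  have "\<delta> * ln X - \<delta> * ln T1 \<le> integral {T1..X} (\<lambda>t. q t + q (-t))"
    by (rule has_integral_le[OF i1 integrable_integral]) (use low iq1 iq2' integrable_add in auto)
  also have "\<dots> = integral {T1..X} q + integral {T1..X} (\<lambda>t. q (-t))"
    by (rule integral_add[OF iq1 iq2'])
  also have "integral {T1..X} (\<lambda>t. q (-t)) = integral {-X..-T1} q"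
    using Henstock_Kurzweil_Integration.integral_reflect_real[of "-T1" "-X" q] by simp
  also have "integral {T1..X} q \<le> Q" unfolding Q_def
    by (rule integral_subset_le) (use iq1 int nn in auto)
  also have "integral {-X..-T1} q \<le> Q" unfolding Q_def
    by (rule integral_subset_le) (use iq2 int nn in auto)
  finally have "\<delta> * ln X - \<delta> * ln T1 \<le> Q + Q" by simp
  moreover have "\<delta> * ln X - \<delta> * ln T1 = 2 * Q + \<delta>" using lnX d by (simp add: algebra_simps)
  ultimately show False using d by simp
qed


lemma alg_F:
  fixes e d :: complex and z \<kappa> h \<sigma> :: real
  assumes "h \<noteq> 0"
  shows "(\<sigma>-1/2)*Re(d*cnj d + ((complex_of_real \<kappa> + \<i> * complex_of_real (h * \<sigma>)) * e
          - \<i> * complex_of_real h * (e / 2 + complex_of_real z * d))*cnj e)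
     - (1/2*Re(d*cnj d) + z/2*Re(d*cnj ((complex_of_real \<kappa> + \<i> * complex_of_real (h * \<sigma>)) * e
          - \<i> * complex_of_real h * (e / 2 + complex_of_real z * d)) + ((complex_of_real \<kappa> + \<i> * complex_of_real (h * \<sigma>)) * e
          - \<i> * complex_of_real h * (e / 2 + complex_of_real z * d))*cnj d))
     - \<kappa>/h*Im(d*cnj d + ((complex_of_real \<kappa> + \<i> * complex_of_real (h * \<sigma>)) * e
          - \<i> * complex_of_real h * (e / 2 + complex_of_real z * d))*cnj e) = -(1-\<sigma>)*Re(d*cnj d)"
  using assms by (simp add: algebra_simps power2_eq_square divide_simps)

lemma alg_J:
  fixes e d :: complex and z \<kappa> h \<sigma> :: real
  shows "Im(d*cnj d + ((complex_of_real \<kappa> + \<i> * complex_of_real (h * \<sigma>)) * e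
          - \<i> * complex_of_real h * (e / 2 + complex_of_real z * d))*cnj e) + (h/2*Re(e*cnj e) + h/2*z*Re(e*cnj d + d*cnj e)) = h*\<sigma>*Re(e*cnj e)"
  by (simp add: algebra_simps power2_eq_square divide_simps)

lemma alg_G:
  fixes e d :: complex and z \<kappa> h \<sigma> :: real
  shows "Re(d*cnj ((complex_of_real \<kappa> + \<i> * complex_of_real (h * \<sigma>)) * e
          - \<i> * complex_of_real h * (e / 2 + complex_of_real z * d)) + ((complex_of_real \<kappa> + \<i> * complex_of_real (h * \<sigma>)) * e
          - \<i> * complex_of_real h * (e / 2 + complex_of_real z * d))*cnj d) - \<kappa>*Re(e*cnj d + d*cnj e) = h*(2*\<sigma>-1)*Im(d*cnj e)"
  by (simp add: algebra_simps power2_eq_square divide_simps)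

lemma le_zero_lim:
  fixes g :: "nat \<Rightarrow> real"
  assumes "g \<longlonglongrightarrow> 0" "eventually (\<lambda>n. c \<le> g n) sequentially"
  shows "c \<le> 0"
  using tendsto_lowerbound[OF assms] by simp

theorem theorem1p2:
  fixes p \<kappa> h \<sigma> :: real and eta eta' eta'' :: "real \<Rightarrow> complex"
  assumes "p > 1" and "h > 0" and "\<sigma> < 1"
    and "finite_energy_solution p \<kappa> h \<sigma> eta eta' eta''"
    and "\<exists>z. eta z \<noteq> 0"
  shows "\<sigma> > 0
    \<and> 0 = (1 - \<sigma>) * integral UNIV (\<lambda>z. (cmod (eta' z))^2)
          - (1/2 - \<sigma>) * cmod (eta 0) powr (p + 1)
    \<and> (\<sigma> = 1/2 - 1/(p - 1) \<longrightarrow> energy p eta eta' = 0)"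
proof -
  note sol = assms(4)[unfolded finite_energy_solution_def]
  have ode: "\<And>z. z \<noteq> 0 \<Longrightarrow> (eta has_vector_derivative eta' z) (at z)"
    and ode2: "\<And>z. z \<noteq> 0 \<Longrightarrow> (eta' has_vector_derivative eta'' z) (at z)"
    using sol by blast+
  have eq2: "eta'' z = (complex_of_real \<kappa> + \<i> * complex_of_real (h * \<sigma>)) * eta z
          - \<i> * complex_of_real h * (eta z / 2 + complex_of_real z * eta' z)" if "z \<noteq> 0" for z
    using sol that by (metis eq_iff_diff_eq_0)
  have cont0: "isCont eta 0" using sol by blast
  obtain a b where la: "(eta' \<longlongrightarrow> a) (at_right 0)" and lb: "(eta' \<longlongrightarrow> b) (at_left 0)"
    and jump: "a - b = - (complex_of_real (cmod (eta 0) powr (p - 1)) * eta 0)"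
    using sol by blast
  obtain M where M: "\<And>z. cmod (eta z) \<le> M" using sol by blast
  have intP: "(\<lambda>z. (cmod (eta' z))^2) integrable_on UNIV" using sol by blast
  define dd where "dd z = (complex_of_real \<kappa> + \<i> * complex_of_real (h * \<sigma>)) * eta z
          - \<i> * complex_of_real h * (eta z / 2 + complex_of_real z * eta' z)" for z
  define u where "u z = eta z * cnj (eta z)" for z
  define w where "w z = eta' z * cnj (eta z)" for z
  define v where "v z = eta' z * cnj (eta' z)" for z
  have Du: "(u has_vector_derivative (eta z * cnj (eta' z) + eta' z * cnj (eta z))) (at z)" if "z \<noteq> 0" for z
    unfolding u_def[abs_def] by (intro has_vector_derivative_mult has_vector_derivative_cnj ode that)
  have Dw: "(w has_vector_derivative (eta' z * cnj (eta' z) + dd z * cnj (eta z))) (at z)" if "z \<noteq> 0" for z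
    unfolding w_def[abs_def] dd_def eq2[OF that, symmetric]
    by (intro has_vector_derivative_mult has_vector_derivative_cnj ode ode2 that)
  have Dv: "(v has_vector_derivative (eta' z * cnj (dd z) + dd z * cnj (eta' z))) (at z)" if "z \<noteq> 0" for z
    unfolding v_def[abs_def] dd_def eq2[OF that, symmetric]
    by (intro has_vector_derivative_mult has_vector_derivative_cnj ode ode2 that)
  define P where "P z = (cmod (eta' z))^2" for z
  define \<rho> where "\<rho> z = (cmod (eta z))^2" for z
  have Re_u: "Re (u z) = \<rho> z" for z by (simp add: u_def \<rho>_def cmod_power2 flip: power2_eq_square)
  have Re_v: "Re (v z) = P z" for z by (simp add: v_def P_def cmod_power2 flip: power2_eq_square)
  have P0: "P z \<ge> 0" for z by (simp add: P_def)
  have \<rho>0: "\<rho> z \<ge> 0" for z by (simp add: \<rho>_def)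
  have cw: "cmod (w z) = cmod (eta' z) * cmod (eta z)" for z by (simp add: w_def norm_mult)
  define ru where "ru z = Re (u z)" for z
  define rw where "rw z = Re (w z)" for z
  define iw where "iw z = Im (w z)" for z
  define rv where "rv z = Re (v z)" for z
  have Dru: "(ru has_real_derivative Re (eta z * cnj (eta' z) + eta' z * cnj (eta z))) (at z)" if "z \<noteq> 0" for z
    unfolding ru_def[abs_def] by (rule has_field_derivative_Re[OF Du[OF that]])
  have Drw: "(rw has_real_derivative Re (eta' z * cnj (eta' z) + dd z * cnj (eta z))) (at z)" if "z \<noteq> 0" for z
    unfolding rw_def[abs_def] by (rule has_field_derivative_Re[OF Dw[OF that]])
  have Diw: "(iw has_real_derivative Im (eta' z * cnj (eta' z) + dd z * cnj (eta z))) (at z)" if "z \<noteq> 0" for z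
    unfolding iw_def[abs_def] by (rule has_field_derivative_Im[OF Dw[OF that]])
  have Drv: "(rv has_real_derivative Re (eta' z * cnj (dd z) + dd z * cnj (eta' z))) (at z)" if "z \<noteq> 0" for z
    unfolding rv_def[abs_def] by (rule has_field_derivative_Re[OF Dv[OF that]])
  have rv_P: "rv z = P z" for z using Re_v by (simp add: rv_def)
  have ru_rho: "ru z = \<rho> z" for z using Re_u by (simp add: ru_def)
  define F where "F z = (\<sigma>-1/2)*rw z - z/2*rv z - \<kappa>/h*iw z" for z
  define J where "J z = iw z + h/2*z*ru z" for z
  define G where "G z = rv z - \<kappa>*ru z" for z
  have DF: "(F has_real_derivative -(1-\<sigma>)*P z) (at z)" if "z \<noteq> 0" for z
  proof -
    have "(F has_real_derivative ((\<sigma>-1/2)*Re(eta' z * cnj (eta' z) + dd z * cnj (eta z))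
         - (1/2*rv z + z/2*Re(eta' z * cnj (dd z) + dd z * cnj (eta' z)))
         - \<kappa>/h*Im(eta' z * cnj (eta' z) + dd z * cnj (eta z)))) (at z)"
      unfolding F_def[abs_def] using assms(2)
      by (auto intro!: derivative_eq_intros Drw[OF that] Diw[OF that] Drv[OF that] simp: field_simps)
    then show ?thesis
      using alg_F[of h \<sigma> "eta' z" \<kappa> "eta z" z] assms(2) by (simp add: dd_def rv_def v_def rv_P[symmetric])
  qed
  have DJ: "(J has_real_derivative h*\<sigma>*\<rho> z) (at z)" if "z \<noteq> 0" for z
  proof -
    have "(J has_real_derivative (Im(eta' z * cnj (eta' z) + dd z * cnj (eta z))
         + (h/2*ru z + h/2*z*Re (eta z * cnj (eta' z) + eta' z * cnj (eta z))))) (at z)"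
      unfolding J_def[abs_def]
      by (auto intro!: derivative_eq_intros Dru[OF that] Diw[OF that] simp: algebra_simps)
    then show ?thesis
      using alg_J[of "eta' z" \<kappa> h \<sigma> "eta z" z] by (simp add: dd_def ru_def u_def ru_rho[symmetric])
  qed
  have DG: "(G has_real_derivative h*(2*\<sigma>-1)*iw z) (at z)" if "z \<noteq> 0" for z
  proof -
    have "(G has_real_derivative (Re(eta' z * cnj (dd z) + dd z * cnj (eta' z))
         - \<kappa>*Re (eta z * cnj (eta' z) + eta' z * cnj (eta z)))) (at z)"
      unfolding G_def[abs_def]
      by (auto intro!: derivative_eq_intros Dru[OF that] Drv[OF that] simp: algebra_simps)
    then show ?thesis
      using alg_G[of "eta' z" \<kappa> h \<sigma> "eta z" z] by (simp add: dd_def iw_def w_def)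
  qed
  have Drho: "(\<rho> has_real_derivative 2 * rw z) (at z)" if "z \<noteq> 0" for z
  proof -
    have "ru = \<rho>" using ru_rho by auto
    moreover have "Re (eta z * cnj (eta' z) + eta' z * cnj (eta z)) = 2 * rw z"
      by (simp add: rw_def w_def algebra_simps)
    ultimately show ?thesis using Dru[OF that] by simp
  qed
  have eta_r: "(eta \<longlongrightarrow> eta 0) (at_right 0)" and eta_l: "(eta \<longlongrightarrow> eta 0) (at_left 0)"
    using cont0 by (simp_all add: isCont_def filterlim_at_split)
  define Fp where "Fp = (\<sigma>-1/2)*Re(a*cnj(eta 0)) - \<kappa>/h*Im(a*cnj(eta 0))"
  define Fm where "Fm = (\<sigma>-1/2)*Re(b*cnj(eta 0)) - \<kappa>/h*Im(b*cnj(eta 0))"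
  have limFp: "(F \<longlongrightarrow> Fp) (at_right 0)"
  proof -
    have "(F \<longlongrightarrow> (\<sigma>-1/2)*Re(a*cnj(eta 0)) - 0/2*Re(a*cnj a) - \<kappa>/h*Im(a*cnj(eta 0))) (at_right 0)"
      unfolding F_def[abs_def] rw_def w_def rv_def v_def iw_def
      by (intro tendsto_intros la eta_r) auto
    then show ?thesis by (simp add: Fp_def)
  qed
  have limFm: "(F \<longlongrightarrow> Fm) (at_left 0)"
  proof -
    have "(F \<longlongrightarrow> (\<sigma>-1/2)*Re(b*cnj(eta 0)) - 0/2*Re(b*cnj b) - \<kappa>/h*Im(b*cnj(eta 0))) (at_left 0)"
      unfolding F_def[abs_def] rw_def w_def rv_def v_def iw_def
      by (intro tendsto_intros lb eta_l) auto
    then show ?thesis by (simp add: Fm_def)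
  qed
  define c where "c = cmod (eta 0) powr (p + 1)"
  have jumpc: "(a - b) * cnj (eta 0) = - complex_of_real c"
  proof -
    have "(a - b) * cnj (eta 0) = - complex_of_real (cmod (eta 0) powr (p - 1) * (cmod (eta 0))^2)"
    proof -
      have n2: "eta 0 * cnj (eta 0) = complex_of_real ((cmod (eta 0))^2)" by (rule complex_norm_square[symmetric])
      have "(a - b) * cnj (eta 0) = - (complex_of_real (cmod (eta 0) powr (p - 1)) * (eta 0 * cnj (eta 0)))"
        by (simp add: jump)
      then show ?thesis by (simp only: n2 of_real_mult)
    qed
    also have "cmod (eta 0) powr (p - 1) * (cmod (eta 0))^2 = c"
    proof (cases "eta 0 = 0")
      case True then show ?thesis using assms(1) by (simp add: c_def)
    next
      case False
      then have "cmod (eta 0) > 0" by simp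
      then have "(cmod (eta 0))^2 = cmod (eta 0) powr 2" by (simp add: powr_numeral)
      moreover have "cmod (eta 0) powr (p - 1 + 2) = cmod (eta 0) powr (p - 1) * cmod (eta 0) powr 2"
        by (rule powr_add)
      moreover have "p - 1 + 2 = p + 1" by simp
      ultimately show ?thesis unfolding c_def by metis
    qed
    finally show ?thesis .
  qed
  have FpFm: "Fp - Fm = (1/2 - \<sigma>) * c"
  proof -
    have "Fp - Fm = (\<sigma>-1/2)*Re((a - b)*cnj(eta 0)) - \<kappa>/h*Im((a - b)*cnj(eta 0))"
      by (simp add: Fp_def Fm_def algebra_simps)
    moreover have "Re((a - b)*cnj(eta 0)) = -c" "Im((a - b)*cnj(eta 0)) = 0"
      by (simp_all only: jumpc) simp_all
    ultimately have "Fp - Fm = (\<sigma>-1/2)*(-c) - \<kappa>/h*0" by (simp only:)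
    then show ?thesis by (simp add: algebra_simps)
  qed
  have contF: "isCont F z" if "z \<noteq> 0" for z using DERIV_isCont[OF DF[OF that]] .
  have PI: "((\<lambda>z. -(1-\<sigma>)*P z) has_integral (F R - F (-R) - (Fp - Fm))) {-R..R}" if R: "R > 0" for R
  proof -
    have i1: "((\<lambda>z. -(1-\<sigma>)*P z) has_integral (F R - Fp)) {0..R}"
      by (rule ftc_lim[OF R DF limFp]) (use contF[of R] R in \<open>auto simp: isCont_def filterlim_at_split\<close>)
    have i2: "((\<lambda>z. -(1-\<sigma>)*P z) has_integral (Fm - F (-R))) {-R..0}"
      by (rule ftc_lim[of "-R" 0 F _ "F (-R)" Fm]) (use contF[of "-R"] R DF limFm in \<open>auto simp: isCont_def filterlim_at_split\<close>)
    have "((\<lambda>z. -(1-\<sigma>)*P z) has_integral ((Fm - F (-R)) + (F R - Fp))) {-R..R}"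
      by (rule has_integral_combine[OF _ _ i2 i1]) (use R in auto)
    then show ?thesis by (simp add: algebra_simps)
  qed
  define I where "I R = integral {-R..R} P" for R
  have intP': "P integrable_on UNIV" using intP by (simp add: P_def[abs_def])
  have key: "(1-\<sigma>) * I R = F (-R) - F R + (1/2 - \<sigma>) * c" if R: "R > 0" for R
  proof -
    have "(P has_integral I R) {-R..R}" unfolding I_def
      by (rule integrable_integral, rule integrable_on_subinterval[OF intP']) auto
    then have "((\<lambda>z. -(1-\<sigma>)*P z) has_integral (-(1-\<sigma>)*I R)) {-R..R}"
      by (rule has_integral_mult_right)
    from has_integral_unique[OF this PI[OF R]] show ?thesis using FpFm by (simp add: algebra_simps)
  qed
  have M0: "M \<ge> 0" using M[of 0] norm_ge_zero order_trans by blast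
  have bw: "cmod (w z) \<le> M * cmod (eta' z)" for z
    unfolding cw using M[of z] by (simp add: mult.commute mult_right_mono)
  have brw: "\<bar>rw z\<bar> \<le> M * cmod (eta' z)" for z
    unfolding rw_def using abs_Re_le_cmod[of "w z"] bw[of z] by linarith
  have biw: "\<bar>iw z\<bar> \<le> M * cmod (eta' z)" for z
    unfolding iw_def using abs_Im_le_cmod[of "w z"] bw[of z] by linarith
  have "\<exists>R. R \<ge> real n + 1 \<and> R > 0 \<and> R * (P R + P (-R)) < inverse (real (Suc n))" for n
    using good_radii[OF intP' P0, of "inverse (real (Suc n))" "real n + 1"] by auto
  then obtain Rs where Rs1: "\<And>n. Rs n \<ge> real n + 1" and Rs2: "\<And>n. Rs n > 0"
    and Rs3: "\<And>n. Rs n * (P (Rs n) + P (-Rs n)) < inverse (real (Suc n))"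
    by metis
  have Rs_top: "filterlim Rs at_top sequentially"
    by (rule filterlim_at_top_mono[OF filterlim_real_sequentially])
       (use Rs1 in \<open>auto intro!: always_eventually intro: order_trans[OF _ Rs1]\<close>)
  have small: "(\<lambda>n. Rs n * (P (Rs n) + P (-Rs n))) \<longlonglongrightarrow> 0"
  proof (rule tendsto_sandwich[OF _ _ tendsto_const LIMSEQ_inverse_real_of_nat])
    show "\<forall>\<^sub>F n in sequentially. 0 \<le> Rs n * (P (Rs n) + P (-Rs n))"
    proof (intro always_eventually allI)
      fix n show "0 \<le> Rs n * (P (Rs n) + P (-Rs n))"
        using Rs2[of n] P0[of "Rs n"] P0[of "-Rs n"] by simp
    qed
    show "\<forall>\<^sub>F n in sequentially. Rs n * (P (Rs n) + P (-Rs n)) \<le> inverse (real (Suc n))"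
      using Rs3 by (auto intro!: always_eventually less_imp_le)
  qed
  have Pbd: "P (Rs n) + P (-Rs n) \<le> Rs n * (P (Rs n) + P (-Rs n))" for n
    using Rs1[of n] P0[of "Rs n"] P0[of "-Rs n"]
    by (simp add: mult_le_cancel_right1 )
  have Pp: "(\<lambda>n. P (Rs n)) \<longlonglongrightarrow> 0"
    by (rule tendsto_sandwich[OF _ _ tendsto_const small])
       (use P0 Pbd in \<open>auto intro!: always_eventually intro: order_trans[OF _ Pbd] simp: add_increasing2\<close>)
  have Pm: "(\<lambda>n. P (-Rs n)) \<longlonglongrightarrow> 0"
    by (rule tendsto_sandwich[OF _ _ tendsto_const small])
       (use P0 Pbd in \<open>auto intro!: always_eventually intro: order_trans[OF _ Pbd] simp: add_increasing\<close>)
  have sqP: "sqrt (P z) = cmod (eta' z)" for z by (simp add: P_def)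
  have np: "(\<lambda>n. cmod (eta' (Rs n))) \<longlonglongrightarrow> 0"
    using tendsto_real_sqrt[OF Pp] by (simp add: sqP)
  have nm: "(\<lambda>n. cmod (eta' (-Rs n))) \<longlonglongrightarrow> 0"
    using tendsto_real_sqrt[OF Pm] by (simp add: sqP)
  define CF where "CF = (\<bar>\<sigma>-1/2\<bar> + \<bar>\<kappa>/h\<bar>) * M"
  have CF0: "CF \<ge> 0" using M0 by (simp add: CF_def)
  have Fbd: "\<bar>F z\<bar> \<le> CF * cmod (eta' z) + \<bar>z\<bar>/2 * P z" for z
  proof -
    have "\<bar>F z\<bar> \<le> \<bar>(\<sigma>-1/2) * rw z\<bar> + \<bar>z/2 * P z\<bar> + \<bar>\<kappa>/h * iw z\<bar>"
      unfolding F_def rv_P by linarith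
    also have "\<dots> = \<bar>\<sigma>-1/2\<bar> * \<bar>rw z\<bar> + \<bar>z\<bar>/2 * P z + \<bar>\<kappa>/h\<bar> * \<bar>iw z\<bar>"
      using P0[of z] by (simp add: abs_mult)
    also have "\<dots> \<le> \<bar>\<sigma>-1/2\<bar> * (M * cmod (eta' z)) + \<bar>z\<bar>/2 * P z + \<bar>\<kappa>/h\<bar> * (M * cmod (eta' z))"
      by (intro add_mono mult_left_mono brw biw) auto
    finally show ?thesis by (simp add: CF_def algebra_simps)
  qed
  have Fp0: "(\<lambda>n. F (Rs n)) \<longlonglongrightarrow> 0"
  proof (rule Lim_null_comparison)
    show "\<forall>\<^sub>F n in sequentially. norm (F (Rs n)) \<le> CF * cmod (eta' (Rs n)) + Rs n * (P (Rs n) + P (-Rs n))"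
    proof (intro always_eventually allI)
      fix n
      have "\<bar>Rs n\<bar>/2 * P (Rs n) \<le> Rs n * (P (Rs n) + P (-Rs n))"
        using Rs2[of n] P0[of "Rs n"] P0[of "-Rs n"] by (simp add: algebra_simps)
      then show "norm (F (Rs n)) \<le> CF * cmod (eta' (Rs n)) + Rs n * (P (Rs n) + P (-Rs n))"
        using Fbd[of "Rs n"] by simp
    qed
    show "(\<lambda>n. CF * cmod (eta' (Rs n)) + Rs n * (P (Rs n) + P (-Rs n))) \<longlonglongrightarrow> 0"
      using tendsto_add[OF tendsto_mult_right_zero[OF np] small] by simp
  qed
  have Fm0: "(\<lambda>n. F (-Rs n)) \<longlonglongrightarrow> 0"
  proof (rule Lim_null_comparison)
    show "\<forall>\<^sub>F n in sequentially. norm (F (-Rs n)) \<le> CF * cmod (eta' (-Rs n)) + Rs n * (P (Rs n) + P (-Rs n))"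
    proof (intro always_eventually allI)
      fix n
      have "\<bar>-Rs n\<bar>/2 * P (-Rs n) \<le> Rs n * (P (Rs n) + P (-Rs n))"
        using Rs2[of n] P0[of "Rs n"] P0[of "-Rs n"] by (simp add: algebra_simps)
      then show "norm (F (-Rs n)) \<le> CF * cmod (eta' (-Rs n)) + Rs n * (P (Rs n) + P (-Rs n))"
        using Fbd[of "-Rs n"] by simp
    qed
    show "(\<lambda>n. CF * cmod (eta' (-Rs n)) + Rs n * (P (Rs n) + P (-Rs n))) \<longlonglongrightarrow> 0"
      using tendsto_add[OF tendsto_mult_right_zero[OF nm] small] by simp
  qed
  define A where "A = integral UNIV P"
  have IA: "(\<lambda>n. I (Rs n)) \<longlonglongrightarrow> A"
    unfolding I_def A_def
    by (rule filterlim_compose[OF int_sym_tendsto[OF integrable_integral[OF intP']] Rs_top])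
  have lim1: "(\<lambda>n. (1-\<sigma>) * I (Rs n)) \<longlonglongrightarrow> (1-\<sigma>) * A"
    by (intro tendsto_intros IA)
  have lim2: "(\<lambda>n. (1-\<sigma>) * I (Rs n)) \<longlonglongrightarrow> 0 - 0 + (1/2-\<sigma>) * c"
    unfolding key[OF Rs2] by (intro tendsto_intros Fp0 Fm0)
  have main: "(1-\<sigma>) * A = (1/2-\<sigma>) * c"
    using LIMSEQ_unique[OF lim1 lim2] by simp
  have ev_ge: "eventually (\<lambda>n. Rs n \<ge> t) sequentially" for t
    using eventually_compose_filterlim[OF eventually_ge_at_top[of t] Rs_top] .
  have sig: "\<sigma> > 0"
  proof (rule ccontr)
    assume "\<not> \<sigma> > 0"
    then have s0: "\<sigma> \<le> 0" by simp
    have dJ: "h*\<sigma>*\<rho> t \<le> 0" for t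
      using assms(2) s0 \<rho>0[of t] by (simp add: mult_nonpos_nonneg mult_nonneg_nonpos)
    have Jdec_pos: "J y \<le> J x" if "0 < x" "x \<le> y" for x y
    proof (rule DERIV_nonpos_imp_nonincreasing[OF that(2)])
      fix t assume "x \<le> t" "t \<le> y"
      then have "t \<noteq> 0" using that by simp
      then show "\<exists>d. DERIV J t :> d \<and> d \<le> 0" using DJ dJ by blast
    qed
    have Jdec_neg: "J y \<le> J x" if "x \<le> y" "y < 0" for x y
    proof (rule DERIV_nonpos_imp_nonincreasing[OF that(1)])
      fix t assume "x \<le> t" "t \<le> y"
      then have "t \<noteq> 0" using that by simp
      then show "\<exists>d. DERIV J t :> d \<and> d \<le> 0" using DJ dJ by blast
    qed
    define L where "L = Im (a * cnj (eta 0))"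
    have imab: "Im (b * cnj (eta 0)) = L"
    proof -
      have "Im ((a - b) * cnj (eta 0)) = 0" by (simp only: jumpc) simp
      then show ?thesis by (simp add: L_def algebra_simps)
    qed
    have limJp: "(J \<longlongrightarrow> L) (at_right 0)"
    proof -
      have "(J \<longlongrightarrow> Im (a * cnj (eta 0)) + h/2*0*Re(eta 0 * cnj (eta 0))) (at_right 0)"
        unfolding J_def[abs_def] iw_def w_def ru_def u_def
        by (intro tendsto_intros la eta_r) auto
      then show ?thesis by (simp add: L_def)
    qed
    have limJm: "(J \<longlongrightarrow> L) (at_left 0)"
    proof -
      have "(J \<longlongrightarrow> Im (b * cnj (eta 0)) + h/2*0*Re(eta 0 * cnj (eta 0))) (at_left 0)"
        unfolding J_def[abs_def] iw_def w_def ru_def u_def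
        by (intro tendsto_intros lb eta_l) auto
      then show ?thesis unfolding imab by simp
    qed
    have JleL: "J z \<le> L" if "z > 0" for z
    proof (rule tendsto_lowerbound[OF limJp])
      show "\<forall>\<^sub>F t in at_right 0. J z \<le> J t"
        using eventually_at_right_real[OF that] by eventually_elim (use Jdec_pos in auto)
    qed simp
    have JgeL: "L \<le> J z" if "z < 0" for z
    proof (rule tendsto_upperbound[OF limJm])
      show "\<forall>\<^sub>F t in at_left 0. J t \<le> J z"
        using eventually_at_left_real[OF that] by eventually_elim (use Jdec_neg in auto)
    qed simp
    have Jp_lb: "- (M * cmod (eta' (Rs n))) \<le> J (Rs n)" for n
    proof -
      have "0 \<le> h/2 * Rs n * ru (Rs n)" using assms(2) Rs2[of n] \<rho>0 by (simp add: ru_rho)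
      then show ?thesis using biw[of "Rs n"] by (simp add: J_def)
    qed
    have Jm_ub: "J (-Rs n) \<le> M * cmod (eta' (-Rs n))" for n
    proof -
      have "0 \<le> h/2 * Rs n * ru (-Rs n)" using assms(2) Rs2[of n] \<rho>0 by (simp add: ru_rho)
      then show ?thesis using biw[of "-Rs n"] by (simp add: J_def)
    qed
    have Mnp: "(\<lambda>n. M * cmod (eta' (Rs n))) \<longlonglongrightarrow> 0" using tendsto_mult_right_zero[OF np] .
    have Mnm: "(\<lambda>n. M * cmod (eta' (-Rs n))) \<longlonglongrightarrow> 0" using tendsto_mult_right_zero[OF nm] .
    have L0: "L = 0"
    proof -
      have "-L \<le> 0"
      proof (rule le_zero_lim[OF Mnp], intro always_eventually allI)
        fix n show "-L \<le> M * cmod (eta' (Rs n))" using Jp_lb[of n] JleL[OF Rs2[of n]] by linarith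
      qed
      moreover have "L \<le> 0"
      proof (rule le_zero_lim[OF Mnm], intro always_eventually allI)
        fix n have "-Rs n < 0" using Rs2[of n] by simp
        then show "L \<le> M * cmod (eta' (-Rs n))" using Jm_ub[of n] JgeL[of "-Rs n"] by linarith
      qed
      ultimately show ?thesis by simp
    qed
    have J0: "J z = 0" if "z \<noteq> 0" for z
    proof (cases "z > 0")
      case True
      have "- J z \<le> 0"
      proof (rule le_zero_lim[OF Mnp])
        show "\<forall>\<^sub>F n in sequentially. - J z \<le> M * cmod (eta' (Rs n))"
          using ev_ge[of z] proof eventually_elim
          case (elim n)
          then show ?case using Jdec_pos[OF True elim] Jp_lb[of n] by linarith
        qed
      qed
      then show ?thesis using JleL[OF True] L0 by simp
    next
      case False
      then have z: "z < 0" using that by simp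
      have "J z \<le> 0"
      proof (rule le_zero_lim[OF Mnm])
        show "\<forall>\<^sub>F n in sequentially. J z \<le> M * cmod (eta' (-Rs n))"
          using ev_ge[of "-z"] proof eventually_elim
          case (elim n)
          then have "-Rs n \<le> z" by simp
          then show ?case using Jdec_neg[OF _ z, of "-Rs n"] Jm_ub[of n] by linarith
        qed
      qed
      then show ?thesis using JgeL[OF z] L0 by simp
    qed
    have hsr: "h*\<sigma>*\<rho> z = 0" if "z \<noteq> 0" for z
    proof -
      have "(J has_real_derivative 0) (at z)"
        by (rule has_field_derivative_transform_within_open[OF DERIV_const, where S="-{0}"])
           (use that J0 in auto)
      from DERIV_unique[OF DJ[OF that] this] show ?thesis .
    qed
    have rho_zero: "\<rho> z = 0" if "z \<noteq> 0" for z
    proof (cases "\<sigma> = 0")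
      case False
      then show ?thesis using hsr[OF that] assms(2) by simp
    next
      case True
      note s00 = True
      have iwK: "iw t = -(h/2)*t*\<rho> t" if "t \<noteq> 0" for t
        using J0[OF that] by (simp add: J_def ru_rho)
      have DG0: "(G has_real_derivative (h^2/2)*t*\<rho> t) (at t)" if "t \<noteq> 0" for t
        using DG[OF that] iwK[OF that] s00 by (simp add: power2_eq_square algebra_simps)
      have rp: "\<rho> (Rs n) \<le> 2*M/h * cmod (eta' (Rs n))" for n
      proof -
        have "h/2 * Rs n * \<rho> (Rs n) \<le> M * cmod (eta' (Rs n))"
          using iwK[of "Rs n"] Rs2[of n] biw[of "Rs n"] by simp
        moreover have "h/2 * \<rho> (Rs n) \<le> h/2 * Rs n * \<rho> (Rs n)"
        proof -
          have "\<rho> (Rs n) \<le> Rs n * \<rho> (Rs n)"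
            using mult_right_mono[of 1 "Rs n" "\<rho> (Rs n)"] Rs1[of n] \<rho>0[of "Rs n"] by simp
          then show ?thesis using assms(2) by (simp add: mult.assoc)
        qed
        ultimately have "h/2 * \<rho> (Rs n) \<le> M * cmod (eta' (Rs n))" by linarith
        then show ?thesis using assms(2) by (simp add: field_simps)
      qed
      have rm: "\<rho> (-Rs n) \<le> 2*M/h * cmod (eta' (-Rs n))" for n
      proof -
        have "h/2 * Rs n * \<rho> (-Rs n) \<le> M * cmod (eta' (-Rs n))"
          using iwK[of "-Rs n"] Rs2[of n] biw[of "-Rs n"] by simp
        moreover have "h/2 * \<rho> (-Rs n) \<le> h/2 * Rs n * \<rho> (-Rs n)"
        proof -
          have "\<rho> (-Rs n) \<le> Rs n * \<rho> (-Rs n)"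
            using mult_right_mono[of 1 "Rs n" "\<rho> (-Rs n)"] Rs1[of n] \<rho>0[of "-Rs n"] by simp
          then show ?thesis using assms(2) by (simp add: mult.assoc)
        qed
        ultimately have "h/2 * \<rho> (-Rs n) \<le> M * cmod (eta' (-Rs n))" by linarith
        then show ?thesis using assms(2) by (simp add: field_simps)
      qed
      have Gq: "G t = P t - \<kappa> * \<rho> t" for t by (simp add: G_def rv_P ru_rho)
      have gp: "(\<lambda>n. P (Rs n) + \<bar>\<kappa>\<bar> * (2*M/h * cmod (eta' (Rs n)))) \<longlonglongrightarrow> 0"
        by (intro tendsto_add_zero tendsto_mult_right_zero Pp np)
      have gm: "(\<lambda>n. P (-Rs n) + \<bar>\<kappa>\<bar> * (2*M/h * cmod (eta' (-Rs n)))) \<longlonglongrightarrow> 0"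
        by (intro tendsto_add_zero tendsto_mult_right_zero Pm nm)
      have Gbd: "G t \<le> P t + \<bar>\<kappa>\<bar> * B" if "\<rho> t \<le> B" for t B
      proof -
        have "- \<kappa> * \<rho> t \<le> \<bar>\<kappa>\<bar> * \<rho> t" using \<rho>0[of t] mult_right_mono[of "-\<kappa>" "\<bar>\<kappa>\<bar>" "\<rho> t"] by simp
        also have "\<dots> \<le> \<bar>\<kappa>\<bar> * B" using that by (simp add: mult_left_mono)
        finally show ?thesis by (simp add: Gq)
      qed
      have Gle: "G t \<le> 0" if "t \<noteq> 0" for t
      proof (cases "t > 0")
        case tp: True
        show ?thesis
        proof (rule le_zero_lim[OF gp])
          show "\<forall>\<^sub>F n in sequentially. G t \<le> P (Rs n) + \<bar>\<kappa>\<bar> * (2*M/h * cmod (eta' (Rs n)))"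
            using ev_ge[of t] proof eventually_elim
            case (elim n)
            have "G t \<le> G (Rs n)"
            proof (rule DERIV_nonneg_imp_nondecreasing[OF elim])
              fix x assume x: "t \<le> x" "x \<le> Rs n"
              then have "x > 0" using tp by simp
              then show "\<exists>d. DERIV G x :> d \<and> d \<ge> 0"
                using DG0[of x] \<rho>0[of x] by (intro exI[of _ "(h^2/2)*x*\<rho> x"]) simp
            qed
            then show ?case using Gbd[OF rp[of n]] by linarith
          qed
        qed
      next
        case False
        then have tn: "t < 0" using that by simp
        show ?thesis
        proof (rule le_zero_lim[OF gm])
          show "\<forall>\<^sub>F n in sequentially. G t \<le> P (-Rs n) + \<bar>\<kappa>\<bar> * (2*M/h * cmod (eta' (-Rs n)))"
            using ev_ge[of "-t"] proof eventually_elim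
            case (elim n)
            then have le: "-Rs n \<le> t" by simp
            have "G t \<le> G (-Rs n)"
            proof (rule DERIV_nonpos_imp_nonincreasing[OF le])
              fix x assume x: "-Rs n \<le> x" "x \<le> t"
              then have "x < 0" using tn by simp
              then have "h^2 * x \<le> 0" by (simp add: mult_nonneg_nonpos)
              then have "(h^2/2)*x*\<rho> x \<le> 0" using \<rho>0[of x] by (simp add: mult_nonpos_nonneg)
              then show "\<exists>d. DERIV G x :> d \<and> d \<le> 0"
                using DG0[of x] \<open>x < 0\<close> by (intro exI[of _ "(h^2/2)*x*\<rho> x"]) simp
            qed
            then show ?case using Gbd[OF rm[of n]] by linarith
          qed
        qed
      qed
      have PK: "P t \<le> \<kappa> * \<rho> t" if "t \<noteq> 0" for t using Gle[OF that] Gq[of t] by simp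
      have wsq: "(cmod (w t))^2 = P t * \<rho> t" for t by (simp add: cw P_def \<rho>_def power_mult_distrib)
      have far: "\<rho> t = 0" if "t \<noteq> 0" "(h/2*t)^2 > \<kappa>" for t
      proof (rule ccontr)
        assume "\<rho> t \<noteq> 0"
        then have pos: "\<rho> t > 0" using \<rho>0[of t] by simp
        have "(iw t)^2 \<le> (cmod (w t))^2"
          unfolding iw_def using abs_le_square_iff[of "Im (w t)" "cmod (w t)"] abs_Im_le_cmod[of "w t"] by simp
        also have "\<dots> \<le> \<kappa> * \<rho> t * \<rho> t" unfolding wsq using PK[OF that(1)] pos by (simp add: mult_right_mono)
        finally have "(h/2*t)^2 * (\<rho> t * \<rho> t) \<le> \<kappa> * (\<rho> t * \<rho> t)"
          using iwK[OF that(1)] by (simp add: power2_eq_square algebra_simps)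
        then have "(h/2*t)^2 \<le> \<kappa>" using pos by (simp add: mult_le_cancel_right)
        then show False using that(2) by simp
      qed
      define c0 where "c0 = sqrt \<bar>\<kappa>\<bar>"
      have c00: "c0 \<ge> 0" by (simp add: c0_def)
      have rwb: "\<bar>rw t\<bar> \<le> c0 * \<rho> t" if "t \<noteq> 0" for t
      proof -
        have "(rw t)^2 \<le> (cmod (w t))^2"
          unfolding rw_def using abs_le_square_iff[of "Re (w t)" "cmod (w t)"] abs_Re_le_cmod[of "w t"] by simp
        also have "\<dots> \<le> \<bar>\<kappa>\<bar> * \<rho> t * \<rho> t" unfolding wsq
          using PK[OF that] \<rho>0[of t] mult_right_mono[of \<kappa> "\<bar>\<kappa>\<bar>" "\<rho> t", OF abs_ge_self]
          by (intro mult_right_mono) auto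
        also have "\<dots> = (c0 * \<rho> t)^2" by (simp add: c0_def power2_eq_square power_mult_distrib)
        finally have "(rw t)^2 \<le> (c0 * \<rho> t)^2" .
        then have "\<bar>rw t\<bar> \<le> \<bar>c0 * \<rho> t\<bar>" using abs_le_square_iff by blast
        then show ?thesis using c00 \<rho>0[of t] by simp
      qed
      define B where "B = 2 * c0 / h + 1"
      have "2 * c0 / h \<ge> 0" using c00 assms(2) by simp
      then have B0: "B > 0" by (simp add: B_def)
      have farB: "\<rho> t = 0" if "\<bar>t\<bar> \<ge> B" for t
      proof (rule far)
        show "t \<noteq> 0" using that B0 by auto
        have "h/2 * \<bar>t\<bar> \<ge> h/2 * B" using that assms(2) by simp
        moreover have "h/2 * B = c0 + h/2" using assms(2) by (simp add: B_def field_simps)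
        ultimately have "h/2 * \<bar>t\<bar> > c0" using assms(2) by linarith
        then have "(h/2 * \<bar>t\<bar>)^2 > c0^2" using c00 by (simp add: power_strict_mono)
        moreover have "c0^2 = \<bar>\<kappa>\<bar>" by (simp add: c0_def)
        ultimately show "(h/2*t)^2 > \<kappa>" by (simp add: power2_eq_square abs_mult_self_eq)
      qed
      show ?thesis
      proof (cases "z > 0")
        case zp: True
        define \<phi> where "\<phi> t = \<rho> t * exp (2*c0*t)" for t
        have "\<phi> z \<le> \<phi> (z + B)"
        proof (rule DERIV_nonneg_imp_nondecreasing[of z "z + B" \<phi>])
          show "z \<le> z + B" using B0 by simp
          fix x assume x: "z \<le> x" "x \<le> z + B"
          then have x0: "x \<noteq> 0" using zp by simp
          have "(\<phi> has_real_derivative (2 * rw x * exp (2*c0*x) + \<rho> x * (exp (2*c0*x) * (2*c0)))) (at x)"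
            unfolding \<phi>_def[abs_def] by (auto intro!: derivative_eq_intros Drho[OF x0])
          moreover have "0 \<le> 2 * rw x * exp (2*c0*x) + \<rho> x * (exp (2*c0*x) * (2*c0))"
          proof -
            have "0 \<le> (2 * rw x + 2 * c0 * \<rho> x) * exp (2*c0*x)"
              using rwb[OF x0] by (intro mult_nonneg_nonneg) auto
            then show ?thesis by (simp add: algebra_simps)
          qed
          ultimately show "\<exists>d. DERIV \<phi> x :> d \<and> d \<ge> 0" by blast
        qed
        moreover have "\<phi> (z + B) = 0" unfolding \<phi>_def using farB[of "z + B"] zp B0 by simp
        ultimately have "\<rho> z * exp (2*c0*z) \<le> 0" by (simp add: \<phi>_def)
        then show ?thesis using \<rho>0[of z] by (simp add: mult_le_0_iff)
      next
        case False
        then have zn: "z < 0" using that by simp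
        define \<phi> where "\<phi> t = \<rho> t * exp (-(2*c0*t))" for t
        have "\<phi> z \<le> \<phi> (z - B)"
        proof (rule DERIV_nonpos_imp_nonincreasing[of "z - B" z \<phi>])
          show "z - B \<le> z" using B0 by simp
          fix x assume x: "z - B \<le> x" "x \<le> z"
          then have x0: "x \<noteq> 0" using zn by simp
          have "(\<phi> has_real_derivative (2 * rw x * exp (-(2*c0*x)) + \<rho> x * (exp (-(2*c0*x)) * (-(2*c0))))) (at x)"
            unfolding \<phi>_def[abs_def] by (auto intro!: derivative_eq_intros Drho[OF x0])
          moreover have "2 * rw x * exp (-(2*c0*x)) + \<rho> x * (exp (-(2*c0*x)) * (-(2*c0))) \<le> 0"
          proof -
            have "(2 * rw x - 2 * c0 * \<rho> x) * exp (-(2*c0*x)) \<le> 0"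
              using rwb[OF x0] by (intro mult_nonpos_nonneg) auto
            then show ?thesis by (simp add: algebra_simps)
          qed
          ultimately show "\<exists>d. DERIV \<phi> x :> d \<and> d \<le> 0" by blast
        qed
        moreover have "\<phi> (z - B) = 0" unfolding \<phi>_def using farB[of "z - B"] zn B0 by simp
        ultimately have "\<rho> z * exp (-(2*c0*z)) \<le> 0" by (simp add: \<phi>_def)
        then show ?thesis using \<rho>0[of z] by (simp add: mult_le_0_iff)
      qed

    qed
    have etaz: "eta z = 0" if "z \<noteq> 0" for z using rho_zero[OF that] by (simp add: \<rho>_def)
    have "(eta \<longlongrightarrow> 0) (at_right 0)"
    proof (rule Lim_transform_eventually[OF tendsto_const])
      show "\<forall>\<^sub>F x in at_right 0. 0 = eta x"
        using eventually_at_right_real[OF zero_less_one] by eventually_elim (use etaz in auto)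
    qed
    then have "eta 0 = 0" using tendsto_unique[OF _ eta_r] by force
    then have "eta z = 0" for z using etaz by (cases "z = 0") auto
    then show False using assms(5) by blast
  qed
  have Aeq: "integral UNIV (\<lambda>z. (cmod (eta' z))^2) = A" by (simp add: A_def P_def[abs_def])
  have E: "\<sigma> = 1/2 - 1/(p - 1) \<longrightarrow> energy p eta eta' = 0"
  proof
    assume s: "\<sigma> = 1/2 - 1/(p - 1)"
    have p1: "p - 1 > 0" "p + 1 > 0" using assms(1) by simp_all
    from main s have eq: "(1/2 + 1/(p-1)) * A = 1/(p-1) * c" by simp
    have "(p + 1) * A = 2 * (p-1) * ((1/2 + 1/(p-1)) * A)" using p1 by (simp add: field_simps)
    also have "\<dots> = 2 * (p-1) * (1/(p-1) * c)" by (simp only: eq)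
    also have "\<dots> = 2 * c" using p1 by (simp add: field_simps)
    finally have "(p + 1) * A = 2 * c" .
    then have "A = 2 * c / (p + 1)" using p1 by (simp add: field_simps)
    then show "energy p eta eta' = 0"
      unfolding energy_def Aeq using p1 by (simp add: c_def field_simps)
  qed
  show ?thesis using sig main E by (simp add: Aeq c_def)

qed
end
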